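(* Let $L$ be the digraph with vertex set $\mathbb{Z}\times\{-1,0,1\}$ in which $((i,x),(j,y))$ is an edge if and only if $j=i+1$ and either $i$ is even, or $i$ is odd and $x+y\neq 0$. Let $\varphi^1,\varphi^2:V(L)\to\mathbb{Z}$ be given by $\varphi^1((i,x))=i$ and $\varphi^2((i,x))=i+1$. Then the layerwise direct product $D=L\,{}_{\varphi^1}\!\!\times_{\varphi^2}L$ is highly arc transitive.
   Context: The integer-line digraph is $Z=(\mathbb{Z},\{(i,i+1)\mid i\in\mathbb{Z}\})$; $\varphi^1,\varphi^2$ are epimorphisms $L\to Z$. For digraphs $G^1=(V^1,E^1)$, $G^2=(V^2,E^2)$ with epimorphisms $\varphi^1:G^1\to Z$, $\varphi^2:G^2\to Z$, the layerwise direct product $G^1\,{}_{\varphi^1}\!\!\times_{\varphi^2}G^2$ is the digraph with vertex set $\{(x,y)\mid x\in V^1,y\in V^2,\varphi^1(x)=\varphi^2(y)\}$ and edge set $\{((a,b),(x,y))\mid (a,x)\in E^1,(b,y)\in E^2\}$. An $n$-arc is a sequence of directed edges $e_0,\dots,e_{n-1}$ with the terminal vertex of $e_i$ equal to the initial vertex of $e_{i+1}$. A digraph is highly arc transitive if for every $n\in\mathbb{N}$ its automorphism group acts transitively on its (nonempty set of) $n$-arcs. *)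

theory Defs
  imports Main
begin

type_synonym 'a digraph = "'a set \<times> ('a \<times> 'a) set"

definition verts :: "'a digraph \<Rightarrow> 'a set" where "verts G = fst G"
definition edges :: "'a digraph \<Rightarrow> ('a \<times> 'a) set" where "edges G = snd G"

definition layerwise_prod ::
  "'a digraph \<Rightarrow> ('a \<Rightarrow> int) \<Rightarrow> 'b digraph \<Rightarrow> ('b \<Rightarrow> int) \<Rightarrow> ('a \<times> 'b) digraph" where
  "layerwise_prod G1 phi1 G2 phi2 =
     (let V = {(x, y). x \<in> verts G1 \<and> y \<in> verts G2 \<and> phi1 x = phi2 y}
      in (V, {((a, b), (x, y)). (a, b) \<in> V \<and> (x, y) \<in> V \<and>
                                 (a, x) \<in> edges G1 \<and> (b, y) \<in> edges G2}))"

definition arcs :: "'a digraph \<Rightarrow> nat \<Rightarrow> ('a \<times> 'a) list set" where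
  "arcs G n = {es. length es = n \<and> set es \<subseteq> edges G \<and>
                   (\<forall>i. Suc i < n \<longrightarrow> snd (es ! i) = fst (es ! Suc i))}"

definition automorphisms :: "'a digraph \<Rightarrow> ('a \<Rightarrow> 'a) set" where
  "automorphisms G = {f. bij_betw f (verts G) (verts G) \<and>
      (\<forall>a\<in>verts G. \<forall>b\<in>verts G. (a, b) \<in> edges G \<longleftrightarrow> (f a, f b) \<in> edges G)}"

definition highly_arc_transitive :: "'a digraph \<Rightarrow> bool" where
  "highly_arc_transitive G \<longleftrightarrow>
     (\<forall>n. arcs G n \<noteq> {} \<and>
          (\<forall>A\<in>arcs G n. \<forall>B\<in>arcs G n. \<exists>f\<in>automorphisms G.
              map (\<lambda>(u, v). (f u, f v)) A = B))"

definition L :: "(int \<times> int) digraph" where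
  "L = ({(i, x). x \<in> {-1, 0, 1}},
        {((i, x), (j, y)). x \<in> {-1, 0, 1} \<and> y \<in> {-1, 0, 1} \<and> j = i + 1 \<and>
                            (even i \<or> (odd i \<and> x + y \<noteq> 0))})"

definition phi1 :: "int \<times> int \<Rightarrow> int" where "phi1 v = fst v"
definition phi2 :: "int \<times> int \<Rightarrow> int" where "phi2 v = fst v + 1"

end

theory Submission
  imports Defs
begin

definition D :: "((int \<times> int) \<times> (int \<times> int)) digraph" where
  "D = layerwise_prod L phi1 L phi2"

definition lay :: "(int \<times> int) \<times> (int \<times> int) \<Rightarrow> int" where
  "lay v = fst (fst v)"
definition ina :: "(int \<times> int) \<times> (int \<times> int) \<Rightarrow> int" where
  "ina v = (if even (lay v) then - snd (fst v) else - snd (snd v))"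
definition outb :: "(int \<times> int) \<times> (int \<times> int) \<Rightarrow> int" where
  "outb v = (if even (lay v) then snd (snd v) else snd (fst v))"
definition enc :: "int \<Rightarrow> int \<Rightarrow> int \<Rightarrow> (int \<times> int) \<times> (int \<times> int)" where
  "enc i a b = (if even i then ((i, -a), (i - 1, b)) else ((i, b), (i - 1, -a)))"

lemma enc_simps[simp]: "lay (enc i a b) = i" "ina (enc i a b) = a" "outb (enc i a b) = b"
  by (auto simp: enc_def lay_def ina_def outb_def)

lemma vertsD: "v \<in> verts D \<longleftrightarrow> snd (fst v) \<in> {-1,0,1} \<and> snd (snd v) \<in> {-1,0,1} \<and> fst (fst v) = fst (snd v) + 1"
  by (cases v) (auto simp: D_def layerwise_prod_def verts_def L_def phi1_def phi2_def Let_def)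

lemma enc_verts: "a \<in> {-1,0,1} \<Longrightarrow> b \<in> {-1,0,1} \<Longrightarrow> enc i a b \<in> verts D"
  unfolding vertsD enc_def by auto

lemma verts_enc: assumes "v \<in> verts D"
  shows "v = enc (lay v) (ina v) (outb v)" "ina v \<in> {-1,0,1}" "outb v \<in> {-1,0,1}"
  using assms unfolding vertsD enc_def lay_def ina_def outb_def
  by (cases v, auto)+

lemma edgesD0: "(u, v) \<in> edges D \<longleftrightarrow> u \<in> verts D \<and> v \<in> verts D \<and>
    (fst u, fst v) \<in> edges L \<and> (snd u, snd v) \<in> edges L"
  by (cases u, cases v) (simp add: D_def layerwise_prod_def verts_def edges_def Let_def)

lemma edgesL: "((i, x), (j, y)) \<in> edges L \<longleftrightarrow> x \<in> {-1,0,1} \<and> y \<in> {-1,0,1} \<and> j = i + 1 \<and>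
    (even i \<or> (odd i \<and> x + y \<noteq> 0))"
  by (simp add: L_def edges_def)

lemma edgesD: "(u, v) \<in> edges D \<longleftrightarrow> u \<in> verts D \<and> v \<in> verts D \<and> lay v = lay u + 1 \<and> outb u \<noteq> ina v"
proof -
  obtain i x j y where u: "u = ((i,x),(j,y))" by (metis prod.collapse)
  obtain i' x' j' y' where v: "v = ((i',x'),(j',y'))" by (metis prod.collapse)
  show ?thesis
  proof (cases "u \<in> verts D \<and> v \<in> verts D")
    case False then show ?thesis using edgesD0 by blast
  next
    case True
    then have j: "j = i - 1" "j' = i' - 1" and xs: "x \<in> {-1,0,1}" "y \<in> {-1,0,1}" "x' \<in> {-1,0,1}" "y' \<in> {-1,0,1}"
      unfolding u v vertsD by auto
    show ?thesis
    proof (cases "i' = i + 1")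
      case False then show ?thesis using \<open>u \<in> verts D \<and> v \<in> verts D\<close>
        unfolding edgesD0 u v lay_def by (simp add: edgesL)
    next
      case True
      have lhs: "(u, v) \<in> edges D \<longleftrightarrow> (even i \<or> x + x' \<noteq> 0) \<and> (odd i \<or> y + y' \<noteq> 0)"
        using \<open>u \<in> verts D \<and> v \<in> verts D\<close> xs unfolding edgesD0 u v j True by (simp add: edgesL) blast
      have rhs: "outb u \<noteq> ina v \<longleftrightarrow> (even i \<or> x + x' \<noteq> 0) \<and> (odd i \<or> y + y' \<noteq> 0)"
        unfolding u v True lay_def ina_def outb_def by auto
      show ?thesis using lhs rhs \<open>u \<in> verts D \<and> v \<in> verts D\<close> True unfolding u v lay_def by auto
    qed
  qed
qed

definition isperm :: "(int \<Rightarrow> int) \<Rightarrow> bool" where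
  "isperm p \<longleftrightarrow> (\<forall>z\<in>{-1,0,1}. p z \<in> {-1,0,1}) \<and> inj_on p {-1,0,1}"

definition transp :: "int \<Rightarrow> int \<Rightarrow> int \<Rightarrow> int" where
  "transp x y z = (if z = x then y else if z = y then x else z)"
definition perm2 :: "int \<Rightarrow> int \<Rightarrow> int \<Rightarrow> int \<Rightarrow> int \<Rightarrow> int" where
  "perm2 x1 x2 y1 y2 z = (if z = x1 then y1 else if z = x2 then y2 else -(y1+y2))"

lemma isperm_id: "isperm (\<lambda>z. z)" by (simp add: isperm_def)

lemma isperm_transp: "x \<in> {-1,0,1} \<Longrightarrow> y \<in> {-1,0,1} \<Longrightarrow> isperm (transp x y)"
  unfolding isperm_def transp_def inj_on_def by auto

lemma isperm_perm2: "x1 \<in> {-1,0,1} \<Longrightarrow> x2 \<in> {-1,0,1} \<Longrightarrow> y1 \<in> {-1,0,1} \<Longrightarrow> y2 \<in> {-1,0,1}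
  \<Longrightarrow> x1 \<noteq> x2 \<Longrightarrow> y1 \<noteq> y2 \<Longrightarrow> isperm (perm2 x1 x2 y1 y2)"
  unfolding isperm_def perm2_def inj_on_def by auto

definition Fm :: "(int \<Rightarrow> int \<Rightarrow> int) \<Rightarrow> int \<Rightarrow> (int \<times> int) \<times> (int \<times> int) \<Rightarrow> (int \<times> int) \<times> (int \<times> int)" where
  "Fm g s v = enc (lay v + s) (g (lay v - 1) (ina v)) (g (lay v) (outb v))"

lemma autF: assumes P: "\<And>t. isperm (g t)" shows "Fm g s \<in> automorphisms D"
proof -
  have img: "Fm g s ` verts D \<subseteq> verts D"
  proof
    fix w assume "w \<in> Fm g s ` verts D"
    then obtain v where v: "v \<in> verts D" "w = Fm g s v" by auto
    show "w \<in> verts D" unfolding v(2) Fm_def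
    proof (rule enc_verts)
      show "g (lay v - 1) (ina v) \<in> {-1,0,1}" using P[of "lay v - 1"] verts_enc(2)[OF v(1)]
        unfolding isperm_def by blast
      show "g (lay v) (outb v) \<in> {-1,0,1}" using P[of "lay v"] verts_enc(3)[OF v(1)]
        unfolding isperm_def by blast
    qed
  qed
  have inj: "inj_on (Fm g s) (verts D)"
  proof (rule inj_onI)
    fix u v assume u: "u \<in> verts D" and v: "v \<in> verts D" and e: "Fm g s u = Fm g s v"
    have l: "lay u = lay v" using arg_cong[OF e, of lay] by (simp add: Fm_def)
    have "g (lay u - 1) (ina u) = g (lay u - 1) (ina v)" using arg_cong[OF e, of ina] l by (simp add: Fm_def)
    hence a: "ina u = ina v" using P[of "lay u - 1"] verts_enc[OF u] verts_enc[OF v]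
      unfolding isperm_def inj_on_def by blast
    have "g (lay u) (outb u) = g (lay u) (outb v)" using arg_cong[OF e, of outb] l by (simp add: Fm_def)
    hence b: "outb u = outb v" using P[of "lay u"] verts_enc[OF u] verts_enc[OF v]
      unfolding isperm_def inj_on_def by blast
    show "u = v" using verts_enc(1)[OF u] verts_enc(1)[OF v] l a b by metis
  qed
  have onto: "\<And>t. g t ` {-1,0,1} = {-1,0,1}"
    using P by (intro endo_inj_surj) (auto simp: isperm_def)
  have surj: "verts D \<subseteq> Fm g s ` verts D"
  proof
    fix w assume w: "w \<in> verts D"
    obtain a where a: "a \<in> {-1,0,1}" "g (lay w - s - 1) a = ina w"
      using verts_enc(2)[OF w] onto[of "lay w - s - 1"] by (metis imageE)
    obtain b where b: "b \<in> {-1,0,1}" "g (lay w - s) b = outb w"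
      using verts_enc(3)[OF w] onto[of "lay w - s"] by (metis imageE)
    have "Fm g s (enc (lay w - s) a b) = w"
      using a b verts_enc(1)[OF w] by (simp add: Fm_def)
    thus "w \<in> Fm g s ` verts D" using enc_verts[OF a(1) b(1)] by (metis image_eqI)
  qed
  have bij: "bij_betw (Fm g s) (verts D) (verts D)"
    using inj img surj by (auto simp: bij_betw_def)
  have edg: "(u, v) \<in> edges D \<longleftrightarrow> (Fm g s u, Fm g s v) \<in> edges D"
    if u: "u \<in> verts D" and v: "v \<in> verts D" for u v
  proof -
    have fu: "Fm g s u \<in> verts D" and fv: "Fm g s v \<in> verts D" using img u v by auto
    have "(lay v = lay u + 1 \<and> outb u \<noteq> ina v) \<longleftrightarrow>
          (lay v = lay u + 1 \<and> g (lay u) (outb u) \<noteq> g (lay v - 1) (ina v))"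
    proof (cases "lay v = lay u + 1")
      case True
      have "inj_on (g (lay u)) {-1,0,1}" using P[of "lay u"] unfolding isperm_def by blast
      then have "g (lay u) (outb u) = g (lay u) (ina v) \<longleftrightarrow> outb u = ina v"
        using verts_enc(3)[OF u] verts_enc(2)[OF v] by (rule inj_on_eq_iff)
      then show ?thesis using True by simp
    qed simp
    thus ?thesis unfolding edgesD using u v fu fv by (simp add: Fm_def)
  qed
  show ?thesis unfolding automorphisms_def using bij edg by blast
qed

definition vtx :: "(((int \<times> int) \<times> (int \<times> int)) \<times> ((int \<times> int) \<times> (int \<times> int))) list \<Rightarrow> nat \<Rightarrow> (int \<times> int) \<times> (int \<times> int)" where
  "vtx A k = (if k = 0 then fst (A ! 0) else snd (A ! (k - 1)))"

lemma arc_nth: assumes "A \<in> arcs D n" "k < n" shows "A ! k = (vtx A k, vtx A (Suc k))"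
proof (cases k)
  case 0 then show ?thesis by (simp add: vtx_def)
next
  case (Suc m)
  then have "snd (A ! m) = fst (A ! k)" using assms by (simp add: arcs_def)
  then show ?thesis using Suc by (simp add: vtx_def prod_eq_iff)
qed

lemma arc_edge: assumes "A \<in> arcs D n" "k < n" shows "(vtx A k, vtx A (Suc k)) \<in> edges D"
proof -
  have "A ! k \<in> set A" using assms by (simp add: arcs_def)
  then show ?thesis using assms arc_nth[OF assms] by (auto simp: arcs_def)
qed

lemma edgeE: assumes "(u, v) \<in> edges D"
  shows "u \<in> verts D" "v \<in> verts D" "lay v = lay u + 1" "outb u \<noteq> ina v"
  using assms unfolding edgesD by auto

lemma arc_vert: assumes "A \<in> arcs D n" "k \<le> n" "0 < n" shows "vtx A k \<in> verts D"
proof (cases "k < n")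
  case True then show ?thesis using edgeE(1)[OF arc_edge[OF assms(1) True]] by simp
next
  case False
  then have k: "k = Suc (n - 1)" using assms by simp
  have "n - 1 < n" using assms by simp
  from edgeE(2)[OF arc_edge[OF assms(1) this]] show ?thesis unfolding k .
qed

lemma arc_lay: assumes "A \<in> arcs D n" "k \<le> n" shows "lay (vtx A k) = lay (vtx A 0) + int k"
  using assms(2)
proof (induction k)
  case 0 then show ?case by simp
next
  case (Suc k)
  then have "k < n" by simp
  from edgeE(3)[OF arc_edge[OF assms(1) this]] Suc show ?case by simp
qed

lemma arc_ne: assumes "A \<in> arcs D n" "k < n" shows "outb (vtx A k) \<noteq> ina (vtx A (Suc k))"
  using edgeE(4)[OF arc_edge[OF assms]] .

lemma arcs_nonempty: "map (\<lambda>k. (enc (int k) 0 1, enc (int k + 1) 0 1)) [0..<n] \<in> arcs D n"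
proof -
  have "(enc (int k) 0 1, enc (int k + 1) 0 1) \<in> edges D" for k
    unfolding edgesD by (simp add: enc_verts)
  then have "set (map (\<lambda>k. (enc (int k) 0 1, enc (int k + 1) 0 1)) [0..<n]) \<subseteq> edges D"
    by auto
  moreover have "\<forall>i. Suc i < n \<longrightarrow> snd (map (\<lambda>k. (enc (int k) 0 1, enc (int k + 1) 0 1)) [0..<n] ! i)
     = fst (map (\<lambda>k. (enc (int k) 0 1, enc (int k + 1) 0 1)) [0..<n] ! Suc i)"
  proof (intro allI impI)
    fix i assume i: "Suc i < n"
    have e: "int (Suc i) = int i + 1" by simp
    show "snd (map (\<lambda>k. (enc (int k) 0 1, enc (int k + 1) 0 1)) [0..<n] ! i)
     = fst (map (\<lambda>k. (enc (int k) 0 1, enc (int k + 1) 0 1)) [0..<n] ! Suc i)"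
      using i by (simp del: of_nat_Suc add: e)
  qed
  ultimately show ?thesis unfolding arcs_def by simp
qed

theorem hatD: "highly_arc_transitive D"
  unfolding highly_arc_transitive_def
proof (intro allI conjI ballI)
  fix n
  show "arcs D n \<noteq> {}" using arcs_nonempty by blast
  fix A B assume A: "A \<in> arcs D n" and B: "B \<in> arcs D n"
  show "\<exists>f\<in>automorphisms D. map (\<lambda>(u, v). (f u, f v)) A = B"
  proof (cases "n = 0")
    case True
    then have "A = []" "B = []" using A B by (auto simp: arcs_def)
    then show ?thesis using autF[OF isperm_id, of 0] by auto
  next
    case False
    then have n: "0 < n" by simp
    define i0 where "i0 = lay (vtx A 0)"
    define j0 where "j0 = lay (vtx B 0)"
    define g where "g t = (let k = t - i0 in
       if k = -1 then transp (ina (vtx A 0)) (ina (vtx B 0))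
       else if 0 \<le> k \<and> k < int n then perm2 (outb (vtx A (nat k))) (ina (vtx A (Suc (nat k))))
                                          (outb (vtx B (nat k))) (ina (vtx B (Suc (nat k))))
       else if k = int n then transp (outb (vtx A n)) (outb (vtx B n))
       else (\<lambda>z. z))" for t
    have P: "isperm (g t)" for t
    proof -
      consider "t - i0 = -1" | "0 \<le> t - i0 \<and> t - i0 < int n" | "t - i0 = int n"
        | "\<not> (t - i0 = -1) \<and> \<not> (0 \<le> t - i0 \<and> t - i0 < int n) \<and> t - i0 \<noteq> int n" by blast
      then show ?thesis
      proof cases
        case 1 then show ?thesis unfolding g_def Let_def
          using isperm_transp verts_enc(2)[OF arc_vert[OF A _ n]] verts_enc(2)[OF arc_vert[OF B _ n]]
          by simp
      next
        case 2
        define k where "k = nat (t - i0)"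
        have k: "k < n" using 2 k_def by linarith
        have "isperm (perm2 (outb (vtx A k)) (ina (vtx A (Suc k))) (outb (vtx B k)) (ina (vtx B (Suc k))))"
          using k by (intro isperm_perm2 arc_ne[OF A] arc_ne[OF B]
             verts_enc(2)[OF arc_vert[OF A _ n]] verts_enc(2)[OF arc_vert[OF B _ n]]
             verts_enc(3)[OF arc_vert[OF A _ n]] verts_enc(3)[OF arc_vert[OF B _ n]]) auto
        then show ?thesis using 2 unfolding g_def Let_def k_def by simp
      next
        case 3 then show ?thesis unfolding g_def Let_def
          using isperm_transp verts_enc(3)[OF arc_vert[OF A _ n]] verts_enc(3)[OF arc_vert[OF B _ n]]
          by simp
      next
        case 4 then have "g t = (\<lambda>z. z)" unfolding g_def Let_def by auto
        then show ?thesis using isperm_id by simp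
      qed
    qed
    define s where "s = j0 - i0"
    have key: "Fm g s (vtx A k) = vtx B k" if k: "k \<le> n" for k
    proof -
      have lA: "lay (vtx A k) = i0 + int k" using arc_lay[OF A k] i0_def by simp
      have lB: "lay (vtx B k) = j0 + int k" using arc_lay[OF B k] j0_def by simp
      have ia: "g (lay (vtx A k) - 1) (ina (vtx A k)) = ina (vtx B k)"
      proof (cases k)
        case 0 then show ?thesis using lA by (simp add: g_def transp_def)
      next
        case (Suc m)
        have m: "m < n" using Suc k by simp
        have "lay (vtx A k) - 1 - i0 = int m" using lA Suc by simp
        then show ?thesis using Suc m arc_ne[OF A m] by (simp add: g_def perm2_def)
      qed
      have ob: "g (lay (vtx A k)) (outb (vtx A k)) = outb (vtx B k)"
      proof (cases "k < n")
        case True then show ?thesis using lA by (simp add: g_def perm2_def)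
      next
        case False then have "k = n" using k by simp
        then show ?thesis using lA by (simp add: g_def transp_def)
      qed
      show ?thesis using verts_enc(1)[OF arc_vert[OF B k n]] lA lB ia ob
        by (simp add: Fm_def s_def add.commute)
    qed
    have M: "map (\<lambda>(u, v). (Fm g s u, Fm g s v)) A = B"
    proof (rule nth_equalityI)
      show "length (map (\<lambda>(u, v). (Fm g s u, Fm g s v)) A) = length B"
        using A B by (simp add: arcs_def)
      fix k assume "k < length (map (\<lambda>(u, v). (Fm g s u, Fm g s v)) A)"
      then have k: "k < n" using A by (simp add: arcs_def)
      then have "length A = n" using A by (simp add: arcs_def)
      then show "map (\<lambda>(u, v). (Fm g s u, Fm g s v)) A ! k = B ! k"
        using k arc_nth[OF A k] arc_nth[OF B k] key[of k] key[of "Suc k"] by simp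
    qed
    show ?thesis
    proof (rule bexI[where x="Fm g s"])
      show "Fm g s \<in> automorphisms D" by (rule autF) (rule P)
      show "map (\<lambda>(u, v). (Fm g s u, Fm g s v)) A = B" by (rule M)
    qed
  qed
qed

theorem mainTheorem2:
  shows "highly_arc_transitive (layerwise_prod L phi1 L phi2)"
  using hatD unfolding D_def .

end
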